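(* Let $K,F,g$ be positive integers with $K\ge g\ge 2$. Let $\mathbf{P}=[p_{j,k}]$ be an $F\times K$ array whose entries are either a special symbol $*$ or nonnegative integers, satisfying: (C2') each integer occurring in $\mathbf{P}$ occurs exactly $g$ times; (C3) for any two distinct entries with $p_{j_1,k_1}=p_{j_2,k_2}=s$ an integer, we have $j_1\neq j_2$, $k_1\neq k_2$, and $p_{j_1,k_2}=p_{j_2,k_1}=*$; (C4) each row of $\mathbf{P}$ contains exactly $g-1$ symbols $*$. Then $F\ge\binom{K}{g-1}$. *)

theory Defs
  imports Main
begin

end

theory Submission
  imports Defs
begin

theorem lemma2:
  fixes K F g :: nat and P :: "nat \<Rightarrow> nat \<Rightarrow> nat option"
  assumes "K > 0" "F > 0" "g \<ge> 2" "K \<ge> g"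
    and C2: "\<And>s. (\<exists>j<F. \<exists>k<K. P j k = Some s) \<Longrightarrow>
               card {(j, k). j < F \<and> k < K \<and> P j k = Some s} = g"
    and C3: "\<And>j1 k1 j2 k2 s. j1 < F \<Longrightarrow> k1 < K \<Longrightarrow> j2 < F \<Longrightarrow> k2 < K \<Longrightarrow>
               (j1, k1) \<noteq> (j2, k2) \<Longrightarrow> P j1 k1 = Some s \<Longrightarrow> P j2 k2 = Some s \<Longrightarrow>
               j1 \<noteq> j2 \<and> k1 \<noteq> k2 \<and> P j1 k2 = None \<and> P j2 k1 = None"
    and C4: "\<And>j. j < F \<Longrightarrow> card {k. k < K \<and> P j k = None} = g - 1"
  shows "F \<ge> K choose (g - 1)"
proof -
  define T where "T j = {k. k < K \<and> P j k = None}" for j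
  have Tsub: "T j \<subseteq> {..<K}" for j unfolding T_def by auto
  have Tfin: "finite (T j)" for j using Tsub finite_subset by blast
  have Tcard: "j < F \<Longrightarrow> card (T j) = g - 1" for j unfolding T_def using C4 by simp
  have swap: "\<exists>j'<F. T j' = insert k (T j - {k'})"
    if j: "j < F" and k: "k < K" "k \<notin> T j" and k': "k' \<in> T j" for j k k'
  proof -
    obtain s where s: "P j k = Some s" using k unfolding T_def by auto
    define Occ where "Occ = {(j, k). j < F \<and> k < K \<and> P j k = Some s}"
    have finOcc: "finite Occ"
      by (rule finite_subset[of _ "{..<F} \<times> {..<K}"]) (auto simp: Occ_def)
    have cardOcc: "card Occ = g" unfolding Occ_def using C2 j k s by blast
    have inj: "inj_on snd Occ"
    proof (rule inj_onI)
      fix x y assume "x \<in> Occ" "y \<in> Occ" "snd x = snd y"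
      then show "x = y"
      proof (cases x; cases y)
        fix a b c d assume xy: "x = (a, b)" "y = (c, d)"
        have "a < F" "b < K" "P a b = Some s" "c < F" "d < K" "P c d = Some s"
          using \<open>x \<in> Occ\<close> \<open>y \<in> Occ\<close> xy unfolding Occ_def by auto
        moreover have "b = d" using \<open>snd x = snd y\<close> xy by simp
        ultimately show "x = y" using C3[of a b c d s] xy by blast
      qed
    qed
    have cs: "card (snd ` Occ) = g" using card_image[OF inj] cardOcc by simp
    have sub: "snd ` Occ \<subseteq> insert k (T j)"
    proof
      fix b assume "b \<in> snd ` Occ"
      then obtain a where ab: "(a, b) \<in> Occ" by force
      show "b \<in> insert k (T j)"
      proof (cases "(a, b) = (j, k)")
        case True then show ?thesis by simp
      next
        case False
        have "a < F" "b < K" "P a b = Some s" using ab unfolding Occ_def by auto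
        then have "P j b = None" using C3[of j k a b s] j k s False by auto
        then show ?thesis using \<open>b < K\<close> unfolding T_def by auto
      qed
    qed
    have ci: "card (insert k (T j)) = g" using Tfin Tcard[OF j] k assms(3) by simp
    have eq: "snd ` Occ = insert k (T j)"
      using card_subset_eq[OF _ sub] Tfin ci cs by simp
    then obtain j' where j'Occ: "(j', k') \<in> Occ" using k' by force
    have j'F: "j' < F" "k' < K" "P j' k' = Some s" using j'Occ unfolding Occ_def by auto
    have sub2: "snd ` Occ - {k'} \<subseteq> T j'"
    proof
      fix b assume "b \<in> snd ` Occ - {k'}"
      then obtain a where ab: "(a, b) \<in> Occ" "b \<noteq> k'" by force
      have "a < F" "b < K" "P a b = Some s" using ab unfolding Occ_def by auto
      then have "P j' b = None" using C3[of j' k' a b s] j'F ab(2) by auto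
      then show "b \<in> T j'" using \<open>b < K\<close> unfolding T_def by auto
    qed
    have c2: "card (snd ` Occ - {k'}) = g - 1" using cs eq k' by simp
    have "snd ` Occ - {k'} = T j'"
      using card_subset_eq[OF Tfin sub2] c2 Tcard[OF j'F(1)] by simp
    moreover have "k \<noteq> k'" using k k' by auto
    ultimately show ?thesis using eq j'F(1) by auto
  qed
  have main: "\<forall>j A. j < F \<longrightarrow> A \<subseteq> {..<K} \<longrightarrow> card A = g - 1 \<longrightarrow> card (A - T j) = n
      \<longrightarrow> (\<exists>j'<F. T j' = A)" for n
  proof (induction n)
    case 0
    show ?case
    proof (intro allI impI)
      fix j A assume h: "j < F" "A \<subseteq> {..<K}" "card A = g - 1" "card (A - T j) = 0"
      have fA: "finite A" using h(2) finite_subset by blast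
      have "A - T j = {}" using h(4) fA by simp
      then have "A \<subseteq> T j" by blast
      then have "A = T j" using card_subset_eq[OF Tfin] h Tcard by simp
      then show "\<exists>j'<F. T j' = A" using h by auto
    qed
  next
    case (Suc n)
    show ?case
    proof (intro allI impI)
      fix j A assume h: "j < F" "A \<subseteq> {..<K}" "card A = g - 1" "card (A - T j) = Suc n"
      have fA: "finite A" using h(2) finite_subset by blast
      obtain k where kA: "k \<in> A" "k \<notin> T j" using h(4)
      proof -
        have "A - T j \<noteq> {}" using h(4) by (metis card.empty nat.distinct(1))
        then show ?thesis using that by blast
      qed
      have c1: "card (A - T j) = card A - card (A \<inter> T j)"
        using card_Diff_subset_Int[of A "T j"] fA by (simp add: Int_commute)
      have c2: "card (T j - A) = card (T j) - card (A \<inter> T j)"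
        using card_Diff_subset_Int[of "T j" A] Tfin[of j] by (simp add: Int_commute)
      have "card (T j - A) = Suc n" using c1 c2 h Tcard by simp
      then obtain k' where k': "k' \<in> T j" "k' \<notin> A"
      proof -
        have "T j - A \<noteq> {}" using \<open>card (T j - A) = Suc n\<close> by (metis card.empty nat.distinct(1))
        then show ?thesis using that by blast
      qed
      have kK: "k < K" using kA h(2) by auto
      obtain j' where j': "j' < F" "T j' = insert k (T j - {k'})"
        using swap[OF h(1) kK kA(2) k'(1)] by blast
      have "A - T j' = (A - T j) - {k}" using j'(2) k' by auto
      then have "card (A - T j') = n" using h(4) kA by simp
      then show "\<exists>j'<F. T j' = A" using Suc.IH j'(1) h(2,3) by blast
    qed
  qed
  have "{B. B \<subseteq> {..<K} \<and> card B = g - 1} \<subseteq> T ` {..<F}"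
  proof
    fix A assume "A \<in> {B. B \<subseteq> {..<K} \<and> card B = g - 1}"
    then have A: "A \<subseteq> {..<K}" "card A = g - 1" by auto
    have "\<exists>j'<F. T j' = A" using main[of "card (A - T 0)"] assms(2) A by blast
    then show "A \<in> T ` {..<F}" by auto
  qed
  then have "card {B. B \<subseteq> {..<K} \<and> card B = g - 1} \<le> card (T ` {..<F})"
    by (simp add: card_mono)
  also have "\<dots> \<le> F" using card_image_le[of "{..<F}" T] by simp
  finally show ?thesis by (simp add: n_subsets)
qed

end
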